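(* Let $(\mathbf{X},\mathbf{A})\sim \textsf{CSBM}(n,p,q,\boldsymbol{\mu},\sigma^2)$ and suppose that $\|\boldsymbol{\mu}\|=\omega(\sigma\sqrt{\log n})$. Let $\Psi$ be the two-layer MLP attention architecture $$\Psi(\mathbf{X}_i,\mathbf{X}_j)=\boldsymbol{r}^T\,\mathrm{LeakyRelu}\!\left(\mathbf{S}\begin{bmatrix}\tilde{\boldsymbol{w}}^T\mathbf{X}_i\\ \tilde{\boldsymbol{w}}^T\mathbf{X}_j\end{bmatrix}\right),\quad \tilde{\boldsymbol{w}}=\frac{\boldsymbol{\mu}}{\|\boldsymbol{\mu}\|},\quad \mathbf{S}=\begin{bmatrix}1&1\\-1&-1\\1&-1\\-1&1\end{bmatrix},\quad \boldsymbol{r}=R\begin{bmatrix}1\\1\\-1\\-1\end{bmatrix},$$ with an arbitrary scaling parameter $R>0$ (LeakyRelu applied entrywise). Then with probability at least $1-o(1)$ over the data, $\Psi$ separates intra-class edges from inter-class edges, i.e. $\operatorname{sign}(\Psi(\mathbf{X}_i,\mathbf{X}_j))=-\operatorname{sign}(\Psi(\mathbf{X}_k,\mathbf{X}_\ell))$ whenever $(i,j)\in E$ is an intra-class edge and $(k,\ell)\in E$ is an inter-class edge.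
   Context: CSBM: fix $n,d\in\mathbb{N}$, $\boldsymbol{\mu}\in\mathbb{R}^d$, $\sigma>0$, $p,q\in[0,1]$. Draw $\epsilon_1,\dots,\epsilon_n$ i.i.d. Bernoulli$(1/2)$ and set $C_k=\{j\in[n]:\epsilon_j=k\}$ for $k\in\{0,1\}$. Independently, $\mathbf{X}_i\sim N((2\epsilon_i-1)\boldsymbol{\mu},\sigma^2\mathbf{I})$, $\mathbf{X}_i\in\mathbb{R}^d$. The adjacency matrix $\mathbf{A}\in\{0,1\}^{n\times n}$ has independent entries $a_{ij}\sim\mathrm{Ber}(p)$ if $i,j$ lie in the same class and $a_{ij}\sim\mathrm{Ber}(q)$ otherwise; $E$ is the edge set of the graph $G=([n],E)$ with adjacency $\mathbf{A}$. An edge $(i,j)\in E$ is intra-class if $(i,j)\in C_0^2\cup C_1^2$ and inter-class otherwise. $\mathrm{LeakyRelu}(x)=x$ for $x\ge 0$ and $\beta x$ for $x<0$, for a fixed constant $\beta\in[0,1)$. Asymptotic notation refers to $n\to\infty$, with $p,q,\boldsymbol{\mu},\sigma,d$ allowed to depend on $n$. *)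

theory Defs
  imports "HOL-Probability.Probability" "HOL-Library.Landau_Symbols"
begin

text \<open>Vectors in R^d are represented as functions nat => real, only indices k < d matter.
 Class labels: eps i = True means class C_1, False means C_0.\<close>

definition leaky_relu :: "real \<Rightarrow> real \<Rightarrow> real" where
  "leaky_relu \<beta> x = (if x \<ge> 0 then x else \<beta> * x)"

definition vnorm :: "nat \<Rightarrow> (nat \<Rightarrow> real) \<Rightarrow> real" where
  "vnorm d v = sqrt (\<Sum>k<d. (v k)\<^sup>2)"

definition vinner :: "nat \<Rightarrow> (nat \<Rightarrow> real) \<Rightarrow> (nat \<Rightarrow> real) \<Rightarrow> real" where
  "vinner d u v = (\<Sum>k<d. u k * v k)"

definition mlp_att :: "real \<Rightarrow> real \<Rightarrow> nat \<Rightarrow> (nat \<Rightarrow> real) \<Rightarrow> (nat \<Rightarrow> real) \<Rightarrow> (nat \<Rightarrow> real) \<Rightarrow> real" where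
  "mlp_att \<beta> R d mu xi xj =
     (let w = (\<lambda>k. mu k / vnorm d mu);
          a = vinner d w xi; b = vinner d w xj;
          h = (\<lambda>i::nat. if i = 0 then a + b else if i = 1 then - a - b
                        else if i = 2 then a - b else b - a);
          r = (\<lambda>i::nat. if i = 0 then R else if i = 1 then R else if i = 2 then - R else - R)
      in (\<Sum>i<4. r i * leaky_relu \<beta> (h i)))"

definition labels_pmf :: "nat \<Rightarrow> (nat \<Rightarrow> bool) pmf" where
  "labels_pmf n = Pi_pmf {..<n} False (\<lambda>_. bernoulli_pmf (1/2))"

definition adj_pmf :: "nat \<Rightarrow> real \<Rightarrow> real \<Rightarrow> (nat \<Rightarrow> bool) \<Rightarrow> (nat \<times> nat \<Rightarrow> bool) pmf" where
  "adj_pmf n p q eps = Pi_pmf ({..<n} \<times> {..<n}) False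
     (\<lambda>(i,j). bernoulli_pmf (if eps i = eps j then p else q))"

definition graph_pmf :: "nat \<Rightarrow> real \<Rightarrow> real \<Rightarrow> ((nat \<Rightarrow> bool) \<times> (nat \<times> nat \<Rightarrow> bool)) pmf" where
  "graph_pmf n p q = bind_pmf (labels_pmf n) (\<lambda>eps. map_pmf (\<lambda>A. (eps, A)) (adj_pmf n p q eps))"

definition feat_measure :: "nat \<Rightarrow> nat \<Rightarrow> (nat \<Rightarrow> real) \<Rightarrow> real \<Rightarrow> (nat \<Rightarrow> bool) \<Rightarrow> (nat \<Rightarrow> nat \<Rightarrow> real) measure" where
  "feat_measure n d mu \<sigma> eps = PiM {..<n} (\<lambda>i. PiM {..<d} (\<lambda>k.
      density lborel (normal_density ((if eps i then 1 else -1) * mu k) \<sigma>)))"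

definition separates :: "nat \<Rightarrow> ((nat \<Rightarrow> real) \<Rightarrow> (nat \<Rightarrow> real) \<Rightarrow> real) \<Rightarrow> (nat \<Rightarrow> bool) \<Rightarrow> (nat \<times> nat \<Rightarrow> bool) \<Rightarrow> (nat \<Rightarrow> nat \<Rightarrow> real) \<Rightarrow> bool" where
  "separates n \<Psi> eps A X =
     (\<forall>i<n. \<forall>j<n. \<forall>k<n. \<forall>l<n.
        A (i,j) \<and> eps i = eps j \<and> A (k,l) \<and> eps k \<noteq> eps l \<longrightarrow>
          sgn (\<Psi> (X i) (X j)) = - sgn (\<Psi> (X k) (X l)))"

definition sep_prob :: "nat \<Rightarrow> nat \<Rightarrow> (nat \<Rightarrow> real) \<Rightarrow> real \<Rightarrow> real \<Rightarrow> real \<Rightarrow>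
     ((nat \<Rightarrow> real) \<Rightarrow> (nat \<Rightarrow> real) \<Rightarrow> real) \<Rightarrow> real" where
  "sep_prob n d mu \<sigma> p q \<Psi> =
     measure_pmf.expectation (graph_pmf n p q)
       (\<lambda>(eps, A). measure (feat_measure n d mu \<sigma> eps)
          {X \<in> space (feat_measure n d mu \<sigma> eps). separates n \<Psi> eps A X})"

end

theory Submission
  imports Defs
begin


lemma indep_coords:
  assumes P: "\<And>k. k \<in> J \<Longrightarrow> prob_space (D k)" and S: "\<And>k. k \<in> J \<Longrightarrow> sets (D k) = sets borel"
    and J: "J \<noteq> {}"
  shows "prob_space.indep_vars (PiM J D) (\<lambda>_. borel) (\<lambda>k x. (x k :: real)) J"
proof -
  interpret P: prob_space "PiM J D" by (rule prob_space_PiM) (rule P)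
  have rv: "(\<lambda>x. x k) \<in> measurable (PiM J D) borel" if "k \<in> J" for k
    using measurable_component_singleton[OF that, of D] measurable_cong_sets[OF refl S[OF that], of "PiM J D"] by simp
  have L: "distr (PiM J D) (PiM J (\<lambda>_. borel)) (\<lambda>x. \<lambda>k\<in>J. x k) = PiM J D"
  proof -
    have "distr (PiM J D) (PiM J (\<lambda>_. borel)) (\<lambda>x. \<lambda>k\<in>J. x k) = distr (PiM J D) (PiM J D) (\<lambda>x. x)"
      by (rule distr_cong) (auto simp: S space_PiM intro!: sets_PiM_cong)
    then show ?thesis by simp
  qed
  have R: "PiM J (\<lambda>k. distr (PiM J D) borel (\<lambda>x. x k)) = PiM J D"
  proof (rule PiM_cong)
    fix k assume k: "k \<in> J"
    have "distr (PiM J D) borel (\<lambda>x. x k) = distr (PiM J D) (D k) (\<lambda>x. x k)"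
      by (rule distr_cong) (auto simp: S k)
    also have "\<dots> = D k" by (rule distr_PiM_component[OF P k])
    finally show "distr (PiM J D) borel (\<lambda>x. x k) = D k" .
  qed simp
  show ?thesis
    by (subst P.indep_vars_iff_distr_eq_PiM'[OF J]) (auto simp: rv L R)
qed

lemma node_normal:
  fixes mu :: "nat \<Rightarrow> real" and s \<sigma> :: real
  assumes sig: "\<sigma> > 0" and s: "s = 1 \<or> s = -1" and Npos: "vnorm d mu > 0"
  shows "distributed (PiM {..<d} (\<lambda>k. density lborel (normal_density (s * mu k) \<sigma>))) lborel
           (\<lambda>x. s * vinner d (\<lambda>k. mu k / vnorm d mu) x) (normal_density (vnorm d mu) \<sigma>)"
proof -
  define N where "N = vnorm d mu"
  define D where "D = (\<lambda>k. density lborel (normal_density (s * mu k) \<sigma>))"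
  define I where "I = {k\<in>{..<d}. mu k \<noteq> 0}"
  define \<alpha> where "\<alpha> = (\<lambda>k. s * (mu k / N))"
  have N2: "N\<^sup>2 = (\<Sum>k<d. (mu k)\<^sup>2)" unfolding N_def vnorm_def
    by (simp add: sum_nonneg)
  have s2: "s * s = 1" using s by auto
  have PD: "prob_space (D k)" for k unfolding D_def by (intro prob_space_normal_density sig)
  have SD: "sets (D k) = sets borel" for k unfolding D_def by simp
  interpret P: prob_space "PiM {..<d} D" by (rule prob_space_PiM) (rule PD)
  have "I \<noteq> {}"
  proof
    assume "I = {}"
    then have "\<forall>k<d. mu k = 0" unfolding I_def by auto
    then have "N = 0" unfolding N_def vnorm_def by simp
    with Npos show False unfolding N_def by simp
  qed
  then have "{..<d} \<noteq> {}" unfolding I_def by auto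
  have ind0: "P.indep_vars (\<lambda>_. borel) (\<lambda>k x. (x k :: real)) {..<d}"
    by (rule indep_coords[OF PD SD \<open>{..<d} \<noteq> {}\<close>])
  have ind: "P.indep_vars (\<lambda>_. borel) (\<lambda>k x. 0 + \<alpha> k * x k) I"
    apply (rule P.indep_vars_compose2[where X="\<lambda>k x. x k" and M'="\<lambda>_. borel"])
    apply (rule P.indep_vars_subset[OF ind0])
    apply (auto simp: I_def)
    done
  have comp: "distributed (PiM {..<d} D) lborel (\<lambda>x. x k) (normal_density (s * mu k) \<sigma>)"
    if "k < d" for k
    unfolding distributed_def
  proof (intro conjI)
    have "distr (PiM {..<d} D) lborel (\<lambda>x. x k) = distr (PiM {..<d} D) (D k) (\<lambda>x. x k)"
      by (rule distr_cong) (auto simp: SD)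
    also have "\<dots> = D k" using that by (intro distr_PiM_component[OF PD]) auto
    finally show "distr (PiM {..<d} D) lborel (\<lambda>x. x k) = density lborel (normal_density (s * mu k) \<sigma>)"
      unfolding D_def .
    show "(\<lambda>x. x k) \<in> measurable (PiM {..<d} D) lborel"
      using measurable_component_singleton[of k "{..<d}" D] that measurable_cong_sets[OF refl SD[of k], of "PiM {..<d} D"]
      by simp
  qed simp
  have aff: "distributed (PiM {..<d} D) lborel (\<lambda>x. 0 + \<alpha> k * x k)
      (normal_density (0 + \<alpha> k * (s * mu k)) (\<bar>\<alpha> k\<bar> * \<sigma>))" if "k \<in> I" for k
    using that Npos s by (intro P.normal_density_affine comp sig) (auto simp: I_def \<alpha>_def N_def)
  have sum: "distributed (PiM {..<d} D) lborel (\<lambda>x. \<Sum>k\<in>I. 0 + \<alpha> k * x k)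
     (normal_density (\<Sum>k\<in>I. 0 + \<alpha> k * (s * mu k)) (sqrt (\<Sum>k\<in>I. (\<bar>\<alpha> k\<bar> * \<sigma>)\<^sup>2)))"
    apply (rule P.sum_indep_normal[OF _ \<open>I \<noteq> {}\<close> ind])
    using Npos sig aff s by (auto simp: I_def \<alpha>_def N_def)
  have e1: "(\<lambda>x. \<Sum>k\<in>I. 0 + \<alpha> k * x k) = (\<lambda>x. s * vinner d (\<lambda>k. mu k / N) x)"
  proof
    fix x
    have "(\<Sum>k\<in>I. 0 + \<alpha> k * x k) = (\<Sum>k\<in>I. \<alpha> k * x k)" by simp
    also have "\<dots> = (\<Sum>k<d. \<alpha> k * x k)"
      by (rule sum.mono_neutral_left) (auto simp: I_def \<alpha>_def)
    finally have "(\<Sum>k\<in>I. 0 + \<alpha> k * x k) = (\<Sum>k<d. \<alpha> k * x k)" .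
    then show "(\<Sum>k\<in>I. 0 + \<alpha> k * x k) = s * vinner d (\<lambda>k. mu k / N) x"
      by (simp add: vinner_def \<alpha>_def sum_distrib_left mult.assoc)
  qed
  have e2: "(\<Sum>k\<in>I. 0 + \<alpha> k * (s * mu k)) = N"
  proof -
    have "(\<Sum>k\<in>I. 0 + \<alpha> k * (s * mu k)) = (\<Sum>k<d. (mu k)\<^sup>2 / N)"
      using s by (intro sum.mono_neutral_cong_left) (auto simp: I_def \<alpha>_def power2_eq_square)
    also have "\<dots> = N\<^sup>2 / N" by (simp add: N2 sum_divide_distrib)
    finally show ?thesis using Npos by (simp add: N_def power2_eq_square)
  qed
  have e3: "sqrt (\<Sum>k\<in>I. (\<bar>\<alpha> k\<bar> * \<sigma>)\<^sup>2) = \<sigma>"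
  proof -
    have "(\<Sum>k\<in>I. (\<bar>\<alpha> k\<bar> * \<sigma>)\<^sup>2) = (\<Sum>k<d. (mu k)\<^sup>2 * (\<sigma>\<^sup>2 / N\<^sup>2))"
      using s by (intro sum.mono_neutral_cong_left) (auto simp: I_def \<alpha>_def power_mult_distrib power2_eq_square)
    also have "\<dots> = N\<^sup>2 * (\<sigma>\<^sup>2 / N\<^sup>2)" by (simp only: N2 sum_distrib_right)
    also have "\<dots> = \<sigma>\<^sup>2" using Npos by (simp add: N_def)
    finally show ?thesis using sig by simp
  qed
  show ?thesis using sum unfolding e1 e2 e3 D_def N_def .
qed

lemma fact_add_le: "fact (m + k) \<le> real (m + k) ^ k * fact m"
proof (induction k)
  case 0 then show ?case by simp
next
  case (Suc k)
  have "fact (m + Suc k) = real (m + Suc k) * fact (m + k)" by simp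
  also have "\<dots> \<le> real (m + Suc k) * (real (m + k) ^ k * fact m)"
    using Suc by (intro mult_left_mono) auto
  also have "\<dots> \<le> real (m + Suc k) * (real (m + Suc k) ^ k * fact m)"
    by (intro mult_left_mono mult_right_mono power_mono) auto
  also have "\<dots> = real (m + Suc k) ^ Suc k * fact m" by simp
  finally show ?case .
qed

lemma gauss_tail:
  fixes m \<sigma> a :: real and k :: nat
  assumes sig: "\<sigma> > 0" and a: "a > 0"
  shows "measure (density lborel (normal_density m \<sigma>)) {y. a \<le> \<bar>y - m\<bar>} \<le> (\<sigma>\<^sup>2 * k / a\<^sup>2) ^ k"
proof -
  define D where "D = density lborel (normal_density m \<sigma>)"
  interpret D: prob_space D unfolding D_def by (intro prob_space_normal_density sig)
  define u where "u = (\<lambda>y::real. (y - m) ^ (2 * k))"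
  have hb: "has_bochner_integral lborel (\<lambda>x. normal_density m \<sigma> x * u x) (fact (2 * k) / ((2 / \<sigma>\<^sup>2)^k * fact k))"
    unfolding u_def by (rule normal_moment_even[OF sig])
  have int: "integrable D u"
    unfolding D_def using hb
    by (subst integrable_density) (auto simp: u_def has_bochner_integral_iff)
  have intv: "integral\<^sup>L D u = fact (2 * k) / ((2 / \<sigma>\<^sup>2)^k * fact k)"
    unfolding D_def using hb
    by (subst integral_density) (auto simp: u_def has_bochner_integral_iff)
  have ca: "0 < a ^ (2 * k)" using a by simp
  have sub: "{y. a \<le> \<bar>y - m\<bar>} \<subseteq> {y \<in> space D. a ^ (2 * k) \<le> u y}"
  proof
    fix y assume "y \<in> {y. a \<le> \<bar>y - m\<bar>}"
    then have "a ^ (2 * k) \<le> \<bar>y - m\<bar> ^ (2 * k)" using a by (intro power_mono) auto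
    also have "\<bar>y - m\<bar> ^ (2 * k) = u y" unfolding u_def by (simp add: power_even_abs)
    finally show "y \<in> {y \<in> space D. a ^ (2 * k) \<le> u y}" by (simp add: D_def)
  qed
  have "measure D {y. a \<le> \<bar>y - m\<bar>} \<le> measure D {y \<in> space D. a ^ (2 * k) \<le> u y}"
    by (rule D.finite_measure_mono[OF sub]) (auto simp: D_def u_def)
  also have "\<dots> \<le> integral\<^sup>L D u / a ^ (2 * k)"
    by (rule integral_Markov_inequality_measure[OF int _ _ ca, where A="{}"]) (auto simp: u_def power_mult zero_le_power2)
  also have "\<dots> \<le> (\<sigma>\<^sup>2 * k / a\<^sup>2) ^ k"
  proof -
    have kk: "k + k = 2 * k" by simp
    have f: "fact (2 * k) \<le> real (2 * k) ^ k * fact k"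
      using fact_add_le[of k k] unfolding kk .
    have e: "fact (2 * k) / ((2 / \<sigma>\<^sup>2)^k * fact k) = fact (2 * k) / fact k * (\<sigma>\<^sup>2 / 2) ^ k"
      using sig by (simp add: power_divide)
    have "integral\<^sup>L D u = fact (2 * k) / fact k * (\<sigma>\<^sup>2 / 2) ^ k"
      unfolding intv e ..
    also have "\<dots> \<le> real (2 * k) ^ k * (\<sigma>\<^sup>2 / 2) ^ k"
    proof (rule mult_right_mono)
      show "fact (2 * k) / fact k \<le> real (2 * k) ^ k"
        using f by (simp add: divide_le_eq)
    qed simp
    also have "\<dots> = (\<sigma>\<^sup>2 * k) ^ k"
    proof -
      have "real (2 * k) * (\<sigma>\<^sup>2 / 2) = \<sigma>\<^sup>2 * k" by simp
      then show ?thesis by (metis power_mult_distrib)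
    qed
    finally have "integral\<^sup>L D u \<le> (\<sigma>\<^sup>2 * k) ^ k" .
    then have "integral\<^sup>L D u / a ^ (2 * k) \<le> (\<sigma>\<^sup>2 * k) ^ k / a ^ (2 * k)"
      using ca by (intro divide_right_mono) auto
    also have "\<dots> = (\<sigma>\<^sup>2 * k / a\<^sup>2) ^ k"
      by (simp only: power_divide power_mult)
    finally show ?thesis .
  qed
  finally show ?thesis unfolding D_def .
qed

lemma lr_sum: "leaky_relu \<beta> x + leaky_relu \<beta> (- x) = (1 - \<beta>) * \<bar>x\<bar>"
  by (auto simp: leaky_relu_def algebra_simps)

lemma psi_closed:
  "mlp_att \<beta> R d mu x y = R * (1 - \<beta>) *
     (\<bar>vinner d (\<lambda>k. mu k / vnorm d mu) x + vinner d (\<lambda>k. mu k / vnorm d mu) y\<bar>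
      - \<bar>vinner d (\<lambda>k. mu k / vnorm d mu) x - vinner d (\<lambda>k. mu k / vnorm d mu) y\<bar>)"
proof -
  define a where "a = vinner d (\<lambda>k. mu k / vnorm d mu) x"
  define b where "b = vinner d (\<lambda>k. mu k / vnorm d mu) y"
  have "mlp_att \<beta> R d mu x y = R * leaky_relu \<beta> (a + b) + R * leaky_relu \<beta> (- a - b)
      - R * leaky_relu \<beta> (a - b) - R * leaky_relu \<beta> (b - a)"
    unfolding mlp_att_def Let_def a_def b_def by (simp add: numeral_eq_Suc lessThan_Suc)
  also have "\<dots> = R * (leaky_relu \<beta> (a + b) + leaky_relu \<beta> (- (a + b)))
      - R * (leaky_relu \<beta> (a - b) + leaky_relu \<beta> (- (a - b)))"
    by (simp add: algebra_simps)
  also have "\<dots> = R * (1 - \<beta>) * (\<bar>a + b\<bar> - \<bar>a - b\<bar>)"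
    unfolding lr_sum by (simp add: algebra_simps)
  finally show ?thesis unfolding a_def b_def .
qed

lemma vinner_meas:
  assumes "\<And>k. sets (D k) = sets borel"
  shows "(\<lambda>x. vinner d w x) \<in> borel_measurable (PiM {..<d} D)"
proof -
  have "(\<lambda>x. x k) \<in> borel_measurable (PiM {..<d} D)" if "k < d" for k
    using measurable_component_singleton[of k "{..<d}" D] that measurable_cong_sets[OF refl assms[of k], of "PiM {..<d} D"]
    by simp
  then show ?thesis unfolding vinner_def
    by (intro borel_measurable_sum borel_measurable_times borel_measurable_const) auto
qed

lemma node_meas:
  assumes "\<And>i k. sets (D i k) = sets borel" "i < n"
  shows "(\<lambda>X. vinner d w (X i)) \<in> borel_measurable (PiM {..<n} (\<lambda>i. PiM {..<d} (D i)))"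
  using measurable_compose[OF measurable_component_singleton[of i "{..<n}" "\<lambda>i. PiM {..<d} (D i)"] vinner_meas[of "D i" d w]]
    assms by simp

lemma sep_meas0:
  assumes "\<And>i k. sets (D i k) = sets borel" and n0: "n \<noteq> 0"
  shows "{X \<in> space (PiM {..<n} (\<lambda>i. PiM {..<d} (D i))). separates n (mlp_att \<beta> R d mu) eps A X}
     \<in> sets (PiM {..<n} (\<lambda>i. PiM {..<d} (D i)))"
proof -
  define M where "M = PiM {..<n} (\<lambda>i. PiM {..<d} (D i))"
  define a :: "nat \<Rightarrow> (nat \<Rightarrow> nat \<Rightarrow> real) \<Rightarrow> real" where "a = (\<lambda>i X. vinner d (\<lambda>k. mu k / vnorm d mu) (X i))"
  define F where "F = (\<lambda>i j X. sgn (R * (1 - \<beta>) * (\<bar>a i X + a j X\<bar> - \<bar>a i X - a j X\<bar>)))"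
  have am: "a i \<in> borel_measurable M" if "i < n" for i
    unfolding a_def M_def by (rule node_meas[OF assms(1) that])
  have Fm: "F i j \<in> borel_measurable M" if "i < n" "j < n" for i j
    unfolding F_def using am[OF that(1)] am[OF that(2)] by measurable
  have eq: "separates n (mlp_att \<beta> R d mu) eps A X \<longleftrightarrow>
     (\<forall>i\<in>{..<n}. \<forall>j\<in>{..<n}. \<forall>k\<in>{..<n}. \<forall>l\<in>{..<n}.
        A (i,j) \<and> eps i = eps j \<and> A (k,l) \<and> eps k \<noteq> eps l \<longrightarrow> F i j X = - F k l X)" for X
    unfolding separates_def psi_closed F_def a_def by auto
  have "{X \<in> space M. separates n (mlp_att \<beta> R d mu) eps A X} =
     (\<Inter>i\<in>{..<n}. \<Inter>j\<in>{..<n}. \<Inter>k\<in>{..<n}. \<Inter>l\<in>{..<n}.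
        {X \<in> space M. A (i,j) \<and> eps i = eps j \<and> A (k,l) \<and> eps k \<noteq> eps l \<longrightarrow> F i j X = - F k l X}) \<inter> space M"
    unfolding eq by auto
  also have "\<dots> \<in> sets M"
  proof (intro sets.Int sets.finite_INT ballI finite_lessThan sets.top)
    fix i j k l assume "i \<in> {..<n}" "j \<in> {..<n}" "k \<in> {..<n}" "l \<in> {..<n}"
    then have [measurable]: "F i j \<in> borel_measurable M" "F k l \<in> borel_measurable M" using Fm by auto
    have e: "{X \<in> space M. A (i,j) \<and> eps i = eps j \<and> A (k,l) \<and> eps k \<noteq> eps l \<longrightarrow> F i j X = - F k l X}
       = (if A (i,j) \<and> eps i = eps j \<and> A (k,l) \<and> eps k \<noteq> eps l then {X \<in> space M. F i j X = - F k l X} else space M)"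
      by auto
    show "{X \<in> space M. A (i,j) \<and> eps i = eps j \<and> A (k,l) \<and> eps k \<noteq> eps l \<longrightarrow> F i j X = - F k l X} \<in> sets M"
      unfolding e by (auto intro!: measurable_equality_set borel_measurable_uminus)
  qed (use n0 in \<open>auto simp: M_def\<close>)
  finally show ?thesis unfolding M_def .
qed

lemma sep_meas:
  assumes "\<And>i k. sets (D i k) = sets borel"
  shows "{X \<in> space (PiM {..<n} (\<lambda>i. PiM {..<d} (D i))). separates n (mlp_att \<beta> R d mu) eps A X}
     \<in> sets (PiM {..<n} (\<lambda>i. PiM {..<d} (D i)))"
proof (cases "n = 0")
  case True
  then show ?thesis by (simp add: separates_def)
next
  case False
  then show ?thesis by (rule sep_meas0[OF assms])
qed



lemma node_bad:
  fixes mu :: "nat \<Rightarrow> real" and s \<sigma> :: real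
  assumes sig: "\<sigma> > 0" and s: "s = 1 \<or> s = -1" and Npos: "vnorm d mu > 0"
  shows "measure (PiM {..<d} (\<lambda>k. density lborel (normal_density (s * mu k) \<sigma>)))
     {x \<in> space (PiM {..<d} (\<lambda>k. density lborel (normal_density (s * mu k) \<sigma>))).
        s * vinner d (\<lambda>k. mu k / vnorm d mu) x \<le> 0} \<le> (\<sigma>\<^sup>2 * k / (vnorm d mu)\<^sup>2) ^ k"
proof -
  define M1 where "M1 = PiM {..<d} (\<lambda>k. density lborel (normal_density (s * mu k) \<sigma>))"
  define N where "N = vnorm d mu"
  define Y where "Y = (\<lambda>x. s * vinner d (\<lambda>k. mu k / vnorm d mu) x)"
  define S where "S = {y::real. N \<le> \<bar>y - N\<bar>}"
  interpret P: prob_space M1 unfolding M1_def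
    by (intro prob_space_PiM prob_space_normal_density sig)
  have dist: "distributed M1 lborel Y (normal_density N \<sigma>)"
    unfolding M1_def Y_def N_def by (rule node_normal[OF sig s Npos])
  have Ym: "Y \<in> measurable M1 lborel" using dist by (rule distributed_measurable)
  have Sm: "S \<in> sets lborel" unfolding S_def by measurable
  have sub: "{x \<in> space M1. Y x \<le> 0} \<subseteq> Y -` S \<inter> space M1"
    using Npos by (auto simp: S_def N_def)
  have "measure M1 {x \<in> space M1. Y x \<le> 0} \<le> measure M1 (Y -` S \<inter> space M1)"
    by (rule P.finite_measure_mono[OF sub]) (rule measurable_sets[OF Ym Sm])
  also have "\<dots> = measure (distr M1 lborel Y) S"
    by (rule measure_distr[symmetric, OF Ym Sm])
  also have "\<dots> = measure (density lborel (normal_density N \<sigma>)) S"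
    using dist by (simp add: distributed_def)
  also have "\<dots> \<le> (\<sigma>\<^sup>2 * k / N\<^sup>2) ^ k"
    unfolding S_def using Npos by (intro gauss_tail sig) (simp add: N_def)
  finally show ?thesis unfolding M1_def Y_def N_def .
qed

lemma sign_lem:
  fixes a b :: real
  shows "0 < a * b \<Longrightarrow> 0 < \<bar>a + b\<bar> - \<bar>a - b\<bar>" and "a * b < 0 \<Longrightarrow> \<bar>a + b\<bar> - \<bar>a - b\<bar> < 0"
  by (auto simp: abs_if zero_less_mult_iff mult_less_0_iff)

lemma feat_bound:
  fixes mu :: "nat \<Rightarrow> real"
  assumes b0: "0 \<le> \<beta>" and b1: "\<beta> < 1" and Rp: "R > 0" and sig: "\<sigma> > 0" and Npos: "vnorm d mu > 0"
  shows "1 - real n * (\<sigma>\<^sup>2 * k / (vnorm d mu)\<^sup>2) ^ k \<le> measure (feat_measure n d mu \<sigma> eps)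
     {X \<in> space (feat_measure n d mu \<sigma> eps). separates n (mlp_att \<beta> R d mu) eps A X}"
proof -
  define s :: "nat \<Rightarrow> real" where "s = (\<lambda>i. if eps i then 1 else -1)"
  define D where "D = (\<lambda>i k. density lborel (normal_density (s i * mu k) \<sigma>))"
  define M where "M = PiM {..<n} (\<lambda>i. PiM {..<d} (D i))"
  define w where "w = (\<lambda>k. mu k / vnorm d mu)"
  define \<delta> where "\<delta> = (\<sigma>\<^sup>2 * k / (vnorm d mu)\<^sup>2) ^ k"
  define B where "B = (\<lambda>i. {X \<in> space M. s i * vinner d w (X i) \<le> 0})"
  define G where "G = space M - (\<Union>i<n. B i)"
  have MF: "feat_measure n d mu \<sigma> eps = M"
    unfolding feat_measure_def M_def D_def s_def by simp
  have SD: "sets (D i k) = sets borel" for i k unfolding D_def by simp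
  have PD1: "prob_space (PiM {..<d} (D i))" for i unfolding D_def
    by (intro prob_space_PiM prob_space_normal_density sig)
  interpret P: prob_space M unfolding M_def by (intro prob_space_PiM PD1)
  have am: "(\<lambda>X. vinner d w (X i)) \<in> borel_measurable M" if "i < n" for i
    unfolding M_def by (rule node_meas[OF SD that])
  have Bm: "B i \<in> sets M" if "i < n" for i
    unfolding B_def using am[OF that] by measurable
  have Bb: "measure M (B i) \<le> \<delta>" if i: "i < n" for i
  proof -
    define C where "C = {x \<in> space (PiM {..<d} (D i)). s i * vinner d w x \<le> 0}"
    have Cm: "C \<in> sets (PiM {..<d} (D i))" unfolding C_def
      using vinner_meas[of "D i" d w, OF SD] by measurable
    have comp: "(\<lambda>X. X i) \<in> measurable M (PiM {..<d} (D i))"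
      unfolding M_def using i by (intro measurable_component_singleton) auto
    have "B i = (\<lambda>X. X i) -` C \<inter> space M"
      unfolding B_def C_def using measurable_space[OF comp] by auto
    then have "measure M (B i) = measure (distr M (PiM {..<d} (D i)) (\<lambda>X. X i)) C"
      by (simp add: measure_distr[OF comp Cm])
    also have "distr M (PiM {..<d} (D i)) (\<lambda>X. X i) = PiM {..<d} (D i)"
      unfolding M_def using i by (intro distr_PiM_component PD1) auto
    also have "measure (PiM {..<d} (D i)) C \<le> \<delta>"
      unfolding C_def D_def \<delta>_def w_def
      by (rule node_bad[OF sig _ Npos]) (simp add: s_def)
    finally show ?thesis .
  qed
  have "measure M (\<Union>i<n. B i) \<le> (\<Sum>i<n. measure M (B i))"
    using Bm by (intro P.finite_measure_subadditive_finite) auto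
  also have "\<dots> \<le> (\<Sum>i<n. \<delta>)" using Bb by (intro sum_mono) auto
  finally have U: "measure M (\<Union>i<n. B i) \<le> real n * \<delta>" by simp
  have Um: "(\<Union>i<n. B i) \<in> sets M" using Bm by auto
  have "measure M G = 1 - measure M (\<Union>i<n. B i)"
    unfolding G_def by (rule P.prob_compl[OF Um])
  then have Gb: "1 - real n * \<delta> \<le> measure M G" using U by simp
  have sub: "G \<subseteq> {X \<in> space M. separates n (mlp_att \<beta> R d mu) eps A X}"
  proof
    fix X assume X: "X \<in> G"
    then have pos: "0 < s i * vinner d w (X i)" if "i < n" for i
      using that unfolding G_def B_def by (force simp: not_le)
    have c: "0 < R * (1 - \<beta>)" using Rp b1 by simp
    have s2: "s i * s i = 1" for i by (simp add: s_def)
    have "separates n (mlp_att \<beta> R d mu) eps A X"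
      unfolding separates_def psi_closed w_def[symmetric]
    proof (intro allI impI)
      fix i j k l
      assume "i < n" "j < n" "k < n" "l < n" and E: "A (i, j) \<and> eps i = eps j \<and> A (k, l) \<and> eps k \<noteq> eps l"
      then have pi: "0 < s i * vinner d w (X i)" and pj: "0 < s j * vinner d w (X j)"
        and pk: "0 < s k * vinner d w (X k)" and pl: "0 < s l * vinner d w (X l)"
        using pos by auto
      have sij: "s j = s i" and skl: "s l = - s k" using E by (auto simp: s_def)
      have "0 < (s i * vinner d w (X i)) * (s j * vinner d w (X j))" using pi pj by simp
      also have "(s i * vinner d w (X i)) * (s j * vinner d w (X j)) = vinner d w (X i) * vinner d w (X j)"
        unfolding sij using s2[of i] by (simp add: algebra_simps)
      finally have "0 < R * (1 - \<beta>) * (\<bar>vinner d w (X i) + vinner d w (X j)\<bar> - \<bar>vinner d w (X i) - vinner d w (X j)\<bar>)"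
        using c sign_lem(1) by simp
      then have 1: "sgn (R * (1 - \<beta>) * (\<bar>vinner d w (X i) + vinner d w (X j)\<bar> - \<bar>vinner d w (X i) - vinner d w (X j)\<bar>)) = 1"
        by simp
      have "0 < (s k * vinner d w (X k)) * (s l * vinner d w (X l))" using pk pl by simp
      also have "(s k * vinner d w (X k)) * (s l * vinner d w (X l)) = - (vinner d w (X k) * vinner d w (X l))"
        unfolding skl using s2[of k] by (simp add: algebra_simps)
      finally have "R * (1 - \<beta>) * (\<bar>vinner d w (X k) + vinner d w (X l)\<bar> - \<bar>vinner d w (X k) - vinner d w (X l)\<bar>) < 0"
        using c sign_lem(2) by (simp add: mult_pos_neg)
      then have 2: "sgn (R * (1 - \<beta>) * (\<bar>vinner d w (X k) + vinner d w (X l)\<bar> - \<bar>vinner d w (X k) - vinner d w (X l)\<bar>)) = -1"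
        by simp
      show "sgn (R * (1 - \<beta>) * (\<bar>vinner d w (X i) + vinner d w (X j)\<bar> - \<bar>vinner d w (X i) - vinner d w (X j)\<bar>)) =
          - sgn (R * (1 - \<beta>) * (\<bar>vinner d w (X k) + vinner d w (X l)\<bar> - \<bar>vinner d w (X k) - vinner d w (X l)\<bar>))"
        unfolding 1 2 by simp
    qed
    then show "X \<in> {X \<in> space M. separates n (mlp_att \<beta> R d mu) eps A X}"
      using X unfolding G_def by auto
  qed
  have "measure M G \<le> measure M {X \<in> space M. separates n (mlp_att \<beta> R d mu) eps A X}"
    by (rule P.finite_measure_mono[OF sub]) (unfold M_def, rule sep_meas[OF SD])
  then show ?thesis using Gb unfolding MF \<delta>_def by simp
qed



lemma numeric:
  fixes \<sigma> N :: real and n :: nat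
  assumes n3: "n \<ge> 3" and sig: "\<sigma> > 0" and H: "\<sigma> * sqrt (ln n) \<le> N / 3"
  shows "N > 0" and "real n * (\<sigma>\<^sup>2 * real (nat \<lceil>2 * ln (real n)\<rceil>) / N\<^sup>2) ^ (nat \<lceil>2 * ln (real n)\<rceil>) \<le> 1 / real n"
proof -
  define L where "L = ln (real n)"
  define k where "k = nat \<lceil>2 * L\<rceil>"
  have npos: "0 < real n" using n3 by simp
  have "exp 1 \<le> real n" using exp_le n3 by linarith
  then have "ln (exp 1) \<le> L" unfolding L_def using npos by (subst ln_le_cancel_iff) auto
  then have L1: "1 \<le> L" by simp
  have sp: "0 < \<sigma> * sqrt L" using sig L1 by simp
  show Np: "N > 0" using sp H unfolding L_def by simp
  have "(\<sigma> * sqrt L)\<^sup>2 \<le> (N / 3)\<^sup>2" using sp H unfolding L_def by (intro power_mono) auto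
  then have sq: "\<sigma>\<^sup>2 * L \<le> N\<^sup>2 / 9" using L1 by (simp add: power_mult_distrib power_divide)
  have kk: "real k = real_of_int \<lceil>2 * L\<rceil>" unfolding k_def using L1 by simp
  have k1: "2 * L \<le> real k" unfolding kk by simp
  have k2: "real k \<le> 3 * L" unfolding kk using L1 by linarith
  define r where "r = \<sigma>\<^sup>2 * real k / N\<^sup>2"
  have r0: "0 \<le> r" unfolding r_def by simp
  have "r \<le> \<sigma>\<^sup>2 * (3 * L) / N\<^sup>2" unfolding r_def using k2 Np
    by (intro divide_right_mono mult_left_mono) auto
  also have "\<dots> = 3 * (\<sigma>\<^sup>2 * L) / N\<^sup>2" by simp
  also have "\<dots> \<le> 3 * (N\<^sup>2 / 9) / N\<^sup>2" using sq Np by (intro divide_right_mono) auto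
  also have "\<dots> = 1 / 3" using Np by simp
  also have "\<dots> \<le> exp (-1)" using exp_le by (simp add: exp_minus field_simps)
  finally have r1: "r \<le> exp (-1)" .
  have "r ^ k \<le> exp (-1) ^ k" using r0 r1 by (intro power_mono) auto
  also have "\<dots> = exp (- real k)" by (simp add: exp_of_nat_mult[symmetric])
  also have "\<dots> \<le> exp (- (2 * L))" using k1 by simp
  also have "\<dots> = 1 / (real n)\<^sup>2"
  proof -
    have e1: "exp (- (2 * L)) = inverse (exp (L + L))" by (simp only: exp_minus mult_2)
    have e2: "exp (L + L) = (real n)\<^sup>2" unfolding exp_add L_def using npos by (simp add: power2_eq_square)
    show ?thesis unfolding e1 e2 by (simp add: inverse_eq_divide)
  qed
  finally have "r ^ k \<le> 1 / (real n)\<^sup>2" .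
  then have "real n * r ^ k \<le> real n * (1 / (real n)\<^sup>2)" using npos by (intro mult_left_mono) auto
  also have "\<dots> = 1 / real n" using npos by (simp add: power2_eq_square)
  finally show "real n * (\<sigma>\<^sup>2 * real (nat \<lceil>2 * ln (real n)\<rceil>) / N\<^sup>2) ^ (nat \<lceil>2 * ln (real n)\<rceil>) \<le> 1 / real n"
    unfolding r_def k_def L_def .
qed


theorem theorem3:
  fixes d :: "nat \<Rightarrow> nat" and mu :: "nat \<Rightarrow> nat \<Rightarrow> real"
    and \<sigma> p q R :: "nat \<Rightarrow> real" and \<beta> :: real
  assumes "0 \<le> \<beta>" "\<beta> < 1"
    and "\<And>n. \<sigma> n > 0"
    and "\<And>n. 0 \<le> p n \<and> p n \<le> 1" "\<And>n. 0 \<le> q n \<and> q n \<le> 1"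
    and "\<And>n. R n > 0"
    and "(\<lambda>n. \<sigma> n * sqrt (ln (real n))) \<in> o(\<lambda>n. vnorm (d n) (mu n))"
  shows "(\<lambda>n. sep_prob n (d n) (mu n) (\<sigma> n) (p n) (q n)
            (mlp_att \<beta> (R n) (d n) (mu n))) \<longlonglongrightarrow> 1"
proof -
  note b0 = assms(1) and b1 = assms(2) and sig = assms(3) and Rp = assms(6)
  define SP where "SP = (\<lambda>n. sep_prob n (d n) (mu n) (\<sigma> n) (p n) (q n) (mlp_att \<beta> (R n) (d n) (mu n)))"
  have ev1: "eventually (\<lambda>n. norm (\<sigma> n * sqrt (ln (real n))) \<le> 1/3 * norm (vnorm (d n) (mu n))) at_top"
    by (rule landau_o.smallD[OF assms(7)]) simp
  have ev2: "eventually (\<lambda>n::nat. n \<ge> 3) at_top" by (rule eventually_ge_at_top)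
  have bnd: "1 - 1 / real n \<le> SP n \<and> SP n \<le> 1"
    if n3: "n \<ge> 3" and Hn: "norm (\<sigma> n * sqrt (ln (real n))) \<le> 1/3 * norm (vnorm (d n) (mu n))" for n
  proof -
    have vn0: "0 \<le> vnorm (d n) (mu n)" unfolding vnorm_def by (simp add: sum_nonneg)
    have H: "\<sigma> n * sqrt (ln (real n)) \<le> vnorm (d n) (mu n) / 3"
      using Hn vn0 by simp
    have Np: "vnorm (d n) (mu n) > 0" by (rule numeric(1)[OF n3 sig H])
    have nb: "real n * ((\<sigma> n)\<^sup>2 * real (nat \<lceil>2 * ln (real n)\<rceil>) / (vnorm (d n) (mu n))\<^sup>2) ^ (nat \<lceil>2 * ln (real n)\<rceil>) \<le> 1 / real n"
      by (rule numeric(2)[OF n3 sig H])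
    define f where "f = (\<lambda>(eps, A). measure (feat_measure n (d n) (mu n) (\<sigma> n) eps)
          {X \<in> space (feat_measure n (d n) (mu n) (\<sigma> n) eps). separates n (mlp_att \<beta> (R n) (d n) (mu n)) eps A X})"
    have fb: "1 - 1 / real n \<le> f x \<and> f x \<le> 1" for x
    proof -
      obtain eps A where x: "x = (eps, A)" by (cases x)
      interpret FP: prob_space "feat_measure n (d n) (mu n) (\<sigma> n) eps"
        unfolding feat_measure_def by (intro prob_space_PiM prob_space_normal_density sig)
      have "1 - real n * ((\<sigma> n)\<^sup>2 * real (nat \<lceil>2 * ln (real n)\<rceil>) / (vnorm (d n) (mu n))\<^sup>2) ^ (nat \<lceil>2 * ln (real n)\<rceil>) \<le> f x"
        unfolding x f_def by (simp only: prod.case) (rule feat_bound[OF b0 b1 Rp sig Np])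
      moreover have "f x \<le> 1" unfolding x f_def by simp
      ultimately show ?thesis using nb by linarith
    qed
    have SPf: "SP n = measure_pmf.expectation (graph_pmf n (p n) (q n)) f"
      unfolding SP_def sep_prob_def f_def ..
    have int: "integrable (measure_pmf (graph_pmf n (p n) (q n))) f"
    proof (rule measure_pmf.integrable_const_bound[where B=1])
      have n1: "1 / real n \<le> 1" using n3 by simp
      show "AE x in measure_pmf (graph_pmf n (p n) (q n)). norm (f x) \<le> 1"
      proof (rule AE_I2)
        fix x show "norm (f x) \<le> 1" using fb[of x] n1 by (simp add: abs_le_iff)
      qed
    qed simp
    have "1 - 1 / real n \<le> SP n" unfolding SPf
      by (rule measure_pmf.integral_ge_const[OF int]) (use fb in auto)
    moreover have "SP n \<le> 1" unfolding SPf
      by (rule measure_pmf.integral_le_const[OF int]) (use fb in auto)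
    ultimately show ?thesis by simp
  qed
  have ev: "eventually (\<lambda>n. 1 - 1 / real n \<le> SP n \<and> SP n \<le> 1) at_top"
    using ev1 ev2 by eventually_elim (rule bnd)
  have lim: "(\<lambda>n. 1 - 1 / real n) \<longlonglongrightarrow> (1 :: real)"
    using tendsto_diff[OF tendsto_const lim_1_over_n, of "1::real"] by simp
  have "SP \<longlonglongrightarrow> 1"
    by (rule tendsto_sandwich[OF _ _ lim tendsto_const])
       (use ev in \<open>auto elim: eventually_mono\<close>)
  then show ?thesis unfolding SP_def .
qed

end
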